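(* For every positive integer $n$, $N'(n,1,n-1)=n$.
   Context: $\mathbb{Z}_4$ is the ring of integers modulo $4$; a $\mathbb{Z}_4$-code of length $n$ is a $\mathbb{Z}_4$-submodule of $\mathbb{Z}_4^n$. Two codes are equivalent if one is obtained from the other by permuting coordinates and changing the signs of some coordinates. Every $\mathbb{Z}_4$-code is permutation-equivalent to one with generator matrix $\begin{pmatrix} I_{k_1} & A & B \\ O & 2I_{k_2} & 2D\end{pmatrix}$ with $A,D$ $(0,1)$-matrices and $B$ a $\mathbb{Z}_4$-matrix; the code then has type $4^{k_1}2^{k_2}$. The trivial extension of a code $C$ of length $n-1$ is $\{(c,0)\mid c\in C\}$ (the only code of length $0$ is the zero code). $N'(n,k_1,k_2)$ denotes the number of equivalence classes of $\mathbb{Z}_4$-codes of length $n$ and type $4^{k_1}2^{k_2}$ that are not equivalent to the trivial extension of any $\mathbb{Z}_4$-code of length $n-1$. *)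

theory Defs
  imports Main "HOL-Library.Numeral_Type" "HOL-Combinatorics.Permutations"
begin

text \<open>Z4 is the type 4 from Numeral_Type (integers mod 4, a commutative ring).
  Vectors of length n are lists of length n over Z4, coordinates 0..n-1.\<close>

type_synonym z4vec = "4 list"

definition z4_vecs :: "nat \<Rightarrow> z4vec set" where
  "z4_vecs n = {v. length v = n}"

definition vadd :: "z4vec \<Rightarrow> z4vec \<Rightarrow> z4vec" where
  "vadd u v = map2 (+) u v"

definition vscale :: "4 \<Rightarrow> z4vec \<Rightarrow> z4vec" where
  "vscale a v = map (\<lambda>x. a * x) v"

definition is_z4_code :: "nat \<Rightarrow> z4vec set \<Rightarrow> bool" where
  "is_z4_code n C \<longleftrightarrow> C \<subseteq> z4_vecs n \<and> replicate n 0 \<in> C \<and>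
     (\<forall>u\<in>C. \<forall>v\<in>C. vadd u v \<in> C) \<and> (\<forall>a. \<forall>v\<in>C. vscale a v \<in> C)"

definition lin_comb :: "nat \<Rightarrow> z4vec list \<Rightarrow> (nat \<Rightarrow> 4) \<Rightarrow> z4vec" where
  "lin_comb n rows cs = map (\<lambda>j. \<Sum>i<length rows. cs i * (rows ! i ! j)) [0..<n]"

definition row_span :: "nat \<Rightarrow> z4vec list \<Rightarrow> z4vec set" where
  "row_span n rows = range (lin_comb n rows)"

text \<open>G (k1+k2 rows, n columns) has the standard form
  [[I_k1, A, B], [O, 2 I_k2, 2 D]] with A, D (0,1)-matrices and B arbitrary.\<close>
definition std_gen_matrix :: "nat \<Rightarrow> nat \<Rightarrow> nat \<Rightarrow> z4vec list \<Rightarrow> bool" where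
  "std_gen_matrix n k1 k2 G \<longleftrightarrow>
     k1 + k2 \<le> n \<and> length G = k1 + k2 \<and> (\<forall>r\<in>set G. length r = n) \<and>
     (\<forall>i<k1. \<forall>j<k1. G ! i ! j = (if i = j then 1 else 0)) \<and>
     (\<forall>i<k1. \<forall>j. k1 \<le> j \<and> j < k1 + k2 \<longrightarrow> G ! i ! j \<in> {0, 1}) \<and>
     (\<forall>i. k1 \<le> i \<and> i < k1 + k2 \<longrightarrow>
        (\<forall>j<k1. G ! i ! j = 0) \<and>
        (\<forall>j. k1 \<le> j \<and> j < k1 + k2 \<longrightarrow> G ! i ! j = (if i = j then 2 else 0)) \<and>
        (\<forall>j. k1 + k2 \<le> j \<and> j < n \<longrightarrow> G ! i ! j \<in> {0, 2}))"

definition perm_coords :: "nat \<Rightarrow> (nat \<Rightarrow> nat) \<Rightarrow> z4vec \<Rightarrow> z4vec" where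
  "perm_coords n \<sigma> v = map (\<lambda>j. v ! \<sigma> j) [0..<n]"

definition has_type :: "nat \<Rightarrow> z4vec set \<Rightarrow> nat \<Rightarrow> nat \<Rightarrow> bool" where
  "has_type n C k1 k2 \<longleftrightarrow>
     (\<exists>\<sigma> G. \<sigma> permutes {..<n} \<and> std_gen_matrix n k1 k2 G \<and>
        C = perm_coords n \<sigma> ` row_span n G)"

definition z4_equiv :: "nat \<Rightarrow> z4vec set \<Rightarrow> z4vec set \<Rightarrow> bool" where
  "z4_equiv n C D \<longleftrightarrow>
     (\<exists>\<sigma> s. \<sigma> permutes {..<n} \<and> (\<forall>j. s j \<in> {1, -1 :: 4}) \<and>
        D = (\<lambda>v. map (\<lambda>j. s j * v ! \<sigma> j) [0..<n]) ` C)"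

definition trivial_ext :: "z4vec set \<Rightarrow> z4vec set" where
  "trivial_ext C = (\<lambda>c. c @ [0]) ` C"

definition nontriv_codes :: "nat \<Rightarrow> nat \<Rightarrow> nat \<Rightarrow> z4vec set set" where
  "nontriv_codes n k1 k2 = {C. is_z4_code n C \<and> has_type n C k1 k2 \<and>
     \<not> (\<exists>D. is_z4_code (n - 1) D \<and> z4_equiv n C (trivial_ext D))}"

definition N' :: "nat \<Rightarrow> nat \<Rightarrow> nat \<Rightarrow> nat" where
  "N' n k1 k2 = card (nontriv_codes n k1 k2 // {(C, D). z4_equiv n C D})"

end

theory Submission imports Defs begin

lemma ex4: "(x::4) = 0 \<or> x = 1 \<or> x = 2 \<or> x = 3"
proof (induct x)
  case (of_int z)
  then have "z = 0 \<or> z = 1 \<or> z = 2 \<or> z = 3" by auto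
  then show ?case by auto
qed

definition ev4 :: "4 \<Rightarrow> bool" where "ev4 x \<longleftrightarrow> x = 0 \<or> x = 2"

lemma ev_add: "ev4 (x + y) = (ev4 x = ev4 y)"
  using ex4[of x] ex4[of y] by (auto simp: ev4_def)
lemma ev_mult: "ev4 (x * y) = (ev4 x \<or> ev4 y)"
  using ex4[of x] ex4[of y] by (auto simp: ev4_def)
lemma ev_diff: "ev4 (x - y) = (ev4 x = ev4 y)"
  using ex4[of x] ex4[of y] by (auto simp: ev4_def)
lemma ev_sign: "s \<in> {1, -1} \<Longrightarrow> ev4 (s * x) = ev4 x"
  using ex4[of x] by (auto simp: ev4_def)
lemma sign_sq: "s \<in> {1, -1::4} \<Longrightarrow> s * s = 1"
  by auto
lemma ev_half: "ev4 x \<Longrightarrow> 2 * (if x = 2 then 1 else 0) = x"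
  by (auto simp: ev4_def)
lemma ev_0[simp]: "ev4 0" and ev_2[simp]: "ev4 2" and nev_1[simp]: "\<not> ev4 1"
  by (auto simp: ev4_def)

definition Code :: "nat \<Rightarrow> nat set \<Rightarrow> z4vec set" where
  "Code n T = {u. length u = n \<and> (\<forall>j<n. j \<notin> T \<longrightarrow> ev4 (u!j)) \<and>
     (\<forall>j\<in>T. \<forall>k\<in>T. ev4 (u!j) = ev4 (u!k))}"

lemma lin_comb_nth:
  assumes n: "n \<ge> 1" and G: "std_gen_matrix n 1 (n-1) G" and j: "j < n"
  shows "lin_comb n G cs ! j = cs 0 * G!0!j + (if j = 0 then 0 else 2 * cs j)"
proof -
  obtain m where m: "n = Suc m" using n by (cases n) auto
  have lenG: "length G = n" using G n by (simp add: std_gen_matrix_def)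
  have rows: "G!Suc i!j = (if Suc i = j then 2 else 0)" if "i < m" for i
  proof -
    have h: "\<forall>i. 1 \<le> i \<and> i < n \<longrightarrow> (\<forall>j<1. G ! i ! j = 0) \<and>
        (\<forall>j. 1 \<le> j \<and> j < n \<longrightarrow> G ! i ! j = (if i = j then 2 else 0))"
      using G n unfolding std_gen_matrix_def by simp
    have "1 \<le> Suc i" "Suc i < n" using that m by auto
    with h j show ?thesis by (cases "j = 0") auto
  qed
  have "lin_comb n G cs ! j = (\<Sum>i<n. cs i * (G ! i ! j))"
    using j lenG by (simp add: lin_comb_def)
  also have "\<dots> = cs 0 * G!0!j + (\<Sum>i<m. cs (Suc i) * (G ! Suc i ! j))"
    unfolding m by (rule sum.lessThan_Suc_shift)
  also have "(\<Sum>i<m. cs (Suc i) * (G ! Suc i ! j)) = (\<Sum>i<m. if i = j - 1 \<and> j \<noteq> 0 then 2 * cs j else 0)"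
    by (rule sum.cong) (auto simp: rows)
  also have "\<dots> = (if j = 0 then 0 else 2 * cs j)"
    using j m by (auto simp: sum.delta')
  finally show ?thesis .
qed


lemma span_char:
  assumes n: "n \<ge> 1" and G: "std_gen_matrix n 1 (n-1) G"
  shows "row_span n G = Code n {j. j < n \<and> G!0!j = 1}"
proof -
  let ?T = "{j. j < n \<and> G!0!j = 1}"
  have g00: "G!0!0 = 1" using G n unfolding std_gen_matrix_def by simp
  have g0j: "G!0!j \<in> {0,1}" if "1 \<le> j" "j < n" for j
    using G n that unfolding std_gen_matrix_def by simp
  have lc: "lin_comb n G cs ! j = cs 0 * G!0!j + (if j = 0 then 0 else 2 * cs j)" if "j < n" for cs j
    using lin_comb_nth[OF n G that] .
  have len: "length (lin_comb n G cs) = n" for cs by (simp add: lin_comb_def)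
  show ?thesis
  proof
    show "row_span n G \<subseteq> Code n ?T"
    proof
      fix u assume "u \<in> row_span n G"
      then obtain cs where u: "u = lin_comb n G cs" by (auto simp: row_span_def)
      have e1: "ev4 (u!j)" if "j < n" "j \<notin> ?T" for j
      proof -
        have "j \<noteq> 0" using that g00 by (metis (mono_tags, lifting) mem_Collect_eq)
        then have "G!0!j = 0" using g0j[of j] that by (auto simp: Suc_le_eq)
        then show ?thesis using lc[OF \<open>j<n\<close>, of cs] \<open>j \<noteq> 0\<close> u by (simp add: ev_mult)
      qed
      have e2: "ev4 (u!j) = ev4 (cs 0)" if "j \<in> ?T" for j
        using that lc[of j cs] u by (auto simp: ev_add ev_mult)
      show "u \<in> Code n ?T" unfolding Code_def using e1 e2 len u by auto
    qed
  next
    show "Code n ?T \<subseteq> row_span n G"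
    proof
      fix u assume u: "u \<in> Code n ?T"
      have lu: "length u = n" using u by (simp add: Code_def)
      define cs where "cs i = (if i = 0 then u!0 else (if u!i - u!0 * G!0!i = 2 then 1 else 0))" for i
      have "lin_comb n G cs = u"
      proof (rule nth_equalityI)
        show "length (lin_comb n G cs) = length u" using len lu by simp
        fix j assume "j < length (lin_comb n G cs)"
        then have j: "j < n" using len by simp
        show "lin_comb n G cs ! j = u ! j"
        proof (cases "j = 0")
          case True then show ?thesis using lc[OF j] g00 by (simp add: cs_def)
        next
          case False
          have "ev4 (u!j - u!0 * G!0!j)"
          proof (cases "G!0!j = 1")
            case True
            then have "j \<in> ?T" "0 \<in> ?T" using j g00 by auto
            then have "ev4 (u!j) = ev4 (u!0)" using u unfolding Code_def by blast
            then show ?thesis using True by (simp add: ev_diff)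
          next
            case F: False
            then have "G!0!j = 0" using g0j[of j] j False by auto
            moreover have "ev4 (u!j)" using u j F unfolding Code_def by auto
            ultimately show ?thesis by simp
          qed
          from ev_half[OF this] show ?thesis using lc[OF j] False by (simp add: cs_def)
        qed
      qed
      then show "u \<in> row_span n G" unfolding row_span_def by (metis rangeI)
    qed
  qed
qed

lemma signed_image:
  assumes \<sigma>: "\<sigma> permutes {..<n}" and s: "\<forall>j. s j \<in> {1, -1 :: 4}" and T: "T \<subseteq> {..<n}"
  shows "(\<lambda>v. map (\<lambda>j. s j * v ! \<sigma> j) [0..<n]) ` Code n T = Code n {j. j < n \<and> \<sigma> j \<in> T}"
    (is "?f ` _ = Code n ?T'")
proof -
  have sl: "\<sigma> j < n" if "j < n" for j using permutes_in_image[OF \<sigma>] that by auto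
  show ?thesis
  proof
  show "?f ` Code n T \<subseteq> Code n ?T'"
  proof
    fix w assume "w \<in> ?f ` Code n T"
    then obtain v where v: "v \<in> Code n T" and w: "w = ?f v" by auto
    show "w \<in> Code n ?T'"
      unfolding Code_def using v sl s unfolding w Code_def by (auto simp: ev_sign)
  qed
next
  have il: "inv \<sigma> i < n" if "i < n" for i using permutes_in_image[OF permutes_inv[OF \<sigma>]] that by auto
  note inv1 = permutes_inverses(1)[OF \<sigma>] and inv2 = permutes_inverses(2)[OF \<sigma>]
  show "Code n ?T' \<subseteq> ?f ` Code n T"
  proof
    fix w assume w: "w \<in> Code n ?T'"
    have lw: "length w = n" using w by (simp add: Code_def)
    define v where "v = map (\<lambda>i. s (inv \<sigma> i) * w ! (inv \<sigma> i)) [0..<n]"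
    have "?f v = w"
    proof (rule nth_equalityI)
      show "length (?f v) = length w" using lw by simp
      fix j assume "j < length (?f v)"
      then have j: "j < n" by simp
      have "?f v ! j = s j * (s j * w ! j)" using j sl[OF j] by (simp add: v_def inv2)
      also have "\<dots> = w ! j" using sign_sq[of "s j"] s by (simp add: mult.assoc[symmetric])
      finally show "?f v ! j = w ! j" .
    qed
    moreover have "v \<in> Code n T"
    proof -
      have a: "ev4 (v!i)" if "i < n" "i \<notin> T" for i
      proof -
        have "inv \<sigma> i \<notin> ?T'" using inv1[of i] that by auto
        then have "ev4 (w ! inv \<sigma> i)" using w il[OF \<open>i<n\<close>] unfolding Code_def by auto
        then show ?thesis using that s by (simp add: v_def ev_sign)
      qed
      have b: "ev4 (v!i) = ev4 (w ! inv \<sigma> i)" if "i \<in> T" for i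
        using that T s by (auto simp: v_def ev_sign)
      have c: "inv \<sigma> i \<in> ?T'" if "i \<in> T" for i using that T il inv1 by auto
      show ?thesis unfolding Code_def using a b c w unfolding Code_def by (auto simp: v_def)
    qed
    ultimately show "w \<in> ?f ` Code n T" by blast
  qed
qed
qed


lemma perm_exists:
  fixes n :: nat
  assumes T: "T \<subseteq> {..<n}" and T': "T' \<subseteq> {..<n}" and c: "card T = card T'"
  shows "\<exists>\<sigma>. \<sigma> permutes {..<n} \<and> \<sigma> ` T' = T"
proof -
  have fT: "finite T" "finite T'" using finite_subset[OF T finite_lessThan] finite_subset[OF T' finite_lessThan] by auto
  obtain f where f: "bij_betw f T' T" using finite_same_card_bij[OF fT(2) fT(1)] c by auto
  have "card ({..<n} - T') = card ({..<n} - T)"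
    using T T' c fT by (simp add: card_Diff_subset)
  then obtain g where g: "bij_betw g ({..<n} - T') ({..<n} - T)"
    using finite_same_card_bij[of "{..<n} - T'" "{..<n} - T"] by auto
  define \<sigma> where "\<sigma> x = (if x \<in> T' then f x else if x < n then g x else x)" for x
  have "bij_betw \<sigma> T' T = bij_betw f T' T" by (rule bij_betw_cong) (simp add: \<sigma>_def)
  with f have b1: "bij_betw \<sigma> T' T" by simp
  have "bij_betw \<sigma> ({..<n} - T') ({..<n} - T) = bij_betw g ({..<n} - T') ({..<n} - T)"
    by (rule bij_betw_cong) (simp add: \<sigma>_def)
  with g have b2: "bij_betw \<sigma> ({..<n} - T') ({..<n} - T)" by simp
  have "bij_betw \<sigma> (T' \<union> ({..<n} - T')) (T \<union> ({..<n} - T))"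
    by (rule bij_betw_combine[OF b1 b2]) auto
  moreover have "T' \<union> ({..<n} - T') = {..<n}" "T \<union> ({..<n} - T) = {..<n}" using T T' by auto
  ultimately have "bij_betw \<sigma> {..<n} {..<n}" by simp
  then have "\<sigma> permutes {..<n}" by (rule bij_imp_permutes) (use T' in \<open>auto simp: \<sigma>_def subset_iff\<close>)
  moreover have "\<sigma> ` T' = T" using b1 by (simp add: bij_betw_def)
  ultimately show ?thesis by blast
qed


lemma preimage_card:
  fixes n :: nat
  assumes \<sigma>: "\<sigma> permutes {..<n}" and T: "T \<subseteq> {..<n}"
  shows "card {j. j < n \<and> \<sigma> j \<in> T} = card T"
proof -
  have "\<sigma> ` {j. j < n \<and> \<sigma> j \<in> T} = T"
  proof
    show "T \<subseteq> \<sigma> ` {j. j < n \<and> \<sigma> j \<in> T}"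
    proof
      fix t assume t: "t \<in> T"
      then have "inv \<sigma> t < n" using T permutes_in_image[OF permutes_inv[OF \<sigma>]] by auto
      then show "t \<in> \<sigma> ` {j. j < n \<and> \<sigma> j \<in> T}"
        using t permutes_inverses(1)[OF \<sigma>] by (metis (mono_tags, lifting) image_eqI mem_Collect_eq)
    qed
  qed auto
  moreover have "inj_on \<sigma> {j. j < n \<and> \<sigma> j \<in> T}" using permutes_inj[OF \<sigma>] inj_on_subset by blast
  ultimately show ?thesis using card_image by metis
qed

lemma preimage_eq:
  fixes n :: nat
  assumes \<sigma>: "\<sigma> permutes {..<n}" and T': "T' \<subseteq> {..<n}"
  shows "{j. j < n \<and> \<sigma> j \<in> \<sigma> ` T'} = T'"
  using T' permutes_inj[OF \<sigma>] by (auto simp: inj_eq)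

lemma CodeD0: "u \<in> Code n T \<Longrightarrow> length u = n" by (simp add: Code_def)
lemma CodeD1: "u \<in> Code n T \<Longrightarrow> j < n \<Longrightarrow> j \<notin> T \<Longrightarrow> ev4 (u!j)" by (simp add: Code_def)
lemma CodeD2: assumes "u \<in> Code n T" "j \<in> T" "k \<in> T" shows "ev4 (u!j) = ev4 (u!k)"
proof -
  have "\<forall>j\<in>T. \<forall>k\<in>T. ev4 (u!j) = ev4 (u!k)" using assms(1) unfolding Code_def mem_Collect_eq by (elim conjE)
  then show ?thesis using assms(2,3) by blast
qed
lemma CodeI: assumes "length u = n" "\<And>j. j < n \<Longrightarrow> j \<notin> T \<Longrightarrow> ev4 (u!j)"
   "\<And>j k. j \<in> T \<Longrightarrow> k \<in> T \<Longrightarrow> ev4 (u!j) = ev4 (u!k)" shows "u \<in> Code n T"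
  unfolding Code_def mem_Collect_eq using assms by (intro conjI allI ballI impI) 

lemma oddset:
  assumes T: "T \<subseteq> {..<n}"
  shows "{j. j < n \<and> (\<exists>u\<in>Code n T. \<not> ev4 (u!j))} = T"
proof
  show "{j. j < n \<and> (\<exists>u\<in>Code n T. \<not> ev4 (u!j))} \<subseteq> T"
  proof
    fix j assume "j \<in> {j. j < n \<and> (\<exists>u\<in>Code n T. \<not> ev4 (u!j))}"
    then obtain u where "j < n" "u \<in> Code n T" "\<not> ev4 (u!j)" by blast
    then show "j \<in> T" using CodeD1 by blast
  qed
  show "T \<subseteq> {j. j < n \<and> (\<exists>u\<in>Code n T. \<not> ev4 (u!j))}"
  proof
    fix j assume j: "j \<in> T"
    let ?u = "map (\<lambda>i. if i \<in> T then 1 else 0) [0..<n] :: z4vec"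
    have "?u \<in> Code n T" using T by (intro CodeI) (auto simp: subset_iff)
    moreover have "\<not> ev4 (?u ! j)" using j T by auto
    ultimately show "j \<in> {j. j < n \<and> (\<exists>u\<in>Code n T. \<not> ev4 (u!j))}" using j T by blast
  qed
qed

lemma Code_inj:
  assumes "T \<subseteq> {..<n}" "T' \<subseteq> {..<n}" "Code n T = Code n T'"
  shows "T = T'"
proof -
  have "T = {j. j < n \<and> (\<exists>u\<in>Code n T. \<not> ev4 (u!j))}" using oddset[OF assms(1)] by (rule sym)
  also have "\<dots> = {j. j < n \<and> (\<exists>u\<in>Code n T'. \<not> ev4 (u!j))}" using assms(3) by (rule arg_cong)
  also have "\<dots> = T'" using oddset[OF assms(2)] .
  finally show ?thesis .
qed

lemma Code_is_code:
  assumes T: "T \<subseteq> {..<n}"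
  shows "is_z4_code n (Code n T)"
  unfolding is_z4_code_def
proof (intro conjI ballI allI)
  show "Code n T \<subseteq> z4_vecs n" by (auto simp: Code_def z4_vecs_def)
  show "replicate n 0 \<in> Code n T" using T by (intro CodeI) (auto simp: subset_iff)
  fix u v assume u: "u \<in> Code n T" and v: "v \<in> Code n T"
  have lu: "length u = n" "length v = n" using u v by (auto simp: CodeD0)
  have nth: "vadd u v ! j = u!j + v!j" if "j < n" for j using that lu by (simp add: vadd_def)
  have ln: "length (vadd u v) = n" using lu by (simp add: vadd_def)
  show "vadd u v \<in> Code n T"
  proof (rule CodeI)
    show "length (vadd u v) = n" by (rule ln)
    fix j assume "j < n" "j \<notin> T"
    then show "ev4 (vadd u v ! j)" using CodeD1[OF u] CodeD1[OF v] nth by (simp add: ev_add)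
  next
    fix j k assume jk: "j \<in> T" "k \<in> T"
    then have "j < n" "k < n" using T by auto
    then show "ev4 (vadd u v ! j) = ev4 (vadd u v ! k)"
      using CodeD2[OF u jk] CodeD2[OF v jk] nth by (simp add: ev_add)
  qed
next
  fix a v assume v: "v \<in> Code n T"
  have lu: "length v = n" using v by (auto simp: CodeD0)
  have nth: "vscale a v ! j = a * v!j" if "j < n" for j using that lu by (simp add: vscale_def)
  show "vscale a v \<in> Code n T"
  proof (rule CodeI)
    show "length (vscale a v) = n" using lu by (simp add: vscale_def)
    fix j assume "j < n" "j \<notin> T"
    then show "ev4 (vscale a v ! j)" using CodeD1[OF v] nth by (simp add: ev_mult)
  next
    fix j k assume jk: "j \<in> T" "k \<in> T"
    then have "j < n" "k < n" using T by auto
    then show "ev4 (vscale a v ! j) = ev4 (vscale a v ! k)"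
      using CodeD2[OF v jk] nth by (simp add: ev_mult)
  qed
qed


lemma perm_coords_eq: "perm_coords n \<sigma> = (\<lambda>v. map (\<lambda>j. (\<lambda>_. 1::4) j * v ! \<sigma> j) [0..<n])"
  by (simp add: fun_eq_iff perm_coords_def)

lemma has_type_Code:
  assumes n: "n \<ge> 1" and h: "has_type n C 1 (n-1)"
  shows "\<exists>T. T \<subseteq> {..<n} \<and> T \<noteq> {} \<and> C = Code n T"
proof -
  obtain \<sigma> G where \<sigma>: "\<sigma> permutes {..<n}" and G: "std_gen_matrix n 1 (n-1) G"
    and C: "C = perm_coords n \<sigma> ` row_span n G" using h unfolding has_type_def by blast
  let ?T0 = "{j. j < n \<and> G!0!j = 1}"
  have g00: "G!0!0 = 1" using G n unfolding std_gen_matrix_def by simp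
  have "C = perm_coords n \<sigma> ` Code n ?T0" unfolding C span_char[OF n G] ..
  also have "\<dots> = Code n {j. j < n \<and> \<sigma> j \<in> ?T0}"
    unfolding perm_coords_eq by (rule signed_image[OF \<sigma>]) (simp, blast)
  finally have C': "C = Code n {j. j < n \<and> \<sigma> j \<in> ?T0}" .
  have "inv \<sigma> 0 < n" using permutes_in_image[OF permutes_inv[OF \<sigma>]] n by auto
  moreover have "\<sigma> (inv \<sigma> 0) = 0" using permutes_inverses(1)[OF \<sigma>] .
  moreover have "0 \<in> ?T0" using g00 n by simp
  ultimately have iv: "inv \<sigma> 0 \<in> {j. j < n \<and> \<sigma> j \<in> ?T0}" by simp
  show ?thesis
  proof (intro exI conjI)
    show "{j. j < n \<and> \<sigma> j \<in> ?T0} \<subseteq> {..<n}" by auto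
    show "{j. j < n \<and> \<sigma> j \<in> ?T0} \<noteq> {}" using iv by (metis empty_iff)
    show "C = Code n {j. j < n \<and> \<sigma> j \<in> ?T0}" by (rule C')
  qed
qed

lemma equiv_Code:
  assumes "z4_equiv n (Code n T) D" "T \<subseteq> {..<n}"
  shows "\<exists>\<sigma>. \<sigma> permutes {..<n} \<and> D = Code n {j. j < n \<and> \<sigma> j \<in> T}"
proof -
  obtain \<sigma> s where \<sigma>: "\<sigma> permutes {..<n}" and s: "\<forall>j. s j \<in> {1, -1 :: 4}"
    and D: "D = (\<lambda>v. map (\<lambda>j. s j * v ! \<sigma> j) [0..<n]) ` Code n T"
    using assms(1) unfolding z4_equiv_def by blast
  show ?thesis using signed_image[OF \<sigma> s assms(2)] D \<sigma> by auto
qed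

lemma Code_nontriv:
  assumes n: "n \<ge> 1" and T: "T \<subseteq> {..<n}"
  shows "\<not> (\<exists>D. is_z4_code (n - 1) D \<and> z4_equiv n (Code n T) (trivial_ext D))"
proof
  assume "\<exists>D. is_z4_code (n - 1) D \<and> z4_equiv n (Code n T) (trivial_ext D)"
  then obtain D where "z4_equiv n (Code n T) (trivial_ext D)" by blast
  then obtain \<sigma> where "trivial_ext D = Code n {j. j < n \<and> \<sigma> j \<in> T}"
    using equiv_Code T by blast
  moreover have "replicate n 2 \<in> Code n {j. j < n \<and> \<sigma> j \<in> T}" by (intro CodeI) auto
  ultimately have "replicate n (2::4) \<in> (\<lambda>c. c @ [0]) ` D" by (simp add: trivial_ext_def)
  then obtain c where c: "replicate n (2::4) = c @ [0]" by blast
  have "(0::4) \<in> set (c @ [0])" by simp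
  then have "0 \<in> set (replicate n (2::4))" using c by simp
  then show False by simp
qed

definition Cl :: "nat \<Rightarrow> nat \<Rightarrow> z4vec set set" where
  "Cl n k = {Code n T' | T'. T' \<subseteq> {..<n} \<and> card T' = k}"

lemma class_eq:
  assumes T: "T \<subseteq> {..<n}"
  shows "{D. z4_equiv n (Code n T) D} = Cl n (card T)"
proof
  show "{D. z4_equiv n (Code n T) D} \<subseteq> Cl n (card T)"
  proof
    fix D assume "D \<in> {D. z4_equiv n (Code n T) D}"
    then obtain \<sigma> where \<sigma>: "\<sigma> permutes {..<n}" and D: "D = Code n {j. j < n \<and> \<sigma> j \<in> T}"
      using equiv_Code T by blast
    show "D \<in> Cl n (card T)" unfolding Cl_def using D preimage_card[OF \<sigma> T] by blast
  qed
next
  show "Cl n (card T) \<subseteq> {D. z4_equiv n (Code n T) D}"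
  proof
    fix D assume "D \<in> Cl n (card T)"
    then obtain T' where T': "T' \<subseteq> {..<n}" "card T' = card T" and D: "D = Code n T'"
      unfolding Cl_def by blast
    obtain \<sigma> where \<sigma>: "\<sigma> permutes {..<n}" and im: "\<sigma> ` T' = T"
      using perm_exists[OF T T'(1)] T'(2) by metis
    have "(\<lambda>v. map (\<lambda>j. (\<lambda>_. 1::4) j * v ! \<sigma> j) [0..<n]) ` Code n T = Code n {j. j < n \<and> \<sigma> j \<in> T}"
      by (rule signed_image[OF \<sigma> _ T]) auto
    also have "{j. j < n \<and> \<sigma> j \<in> T} = T'" using preimage_eq[OF \<sigma> T'(1)] im by simp
    finally have "D = (\<lambda>v. map (\<lambda>j. (\<lambda>_. 1::4) j * v ! \<sigma> j) [0..<n]) ` Code n T" using D by simp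
    then show "D \<in> {D. z4_equiv n (Code n T) D}" unfolding z4_equiv_def mem_Collect_eq
      by (intro exI[of _ \<sigma>] exI[of _ "\<lambda>_. 1"] conjI) (use \<sigma> in auto)
  qed
qed


lemma Code_has_type:
  assumes k: "1 \<le> k" "k \<le> n"
  shows "has_type n (Code n {..<k}) 1 (n-1)"
proof -
  define G :: "z4vec list" where "G = map (\<lambda>i. if i = 0 then map (\<lambda>j. if j < k then 1 else 0) [0..<n]
      else map (\<lambda>j. if j = i then 2 else 0) [0..<n]) [0..<n]"
  have n: "n \<ge> 1" using k by simp
  have G0: "G!0!j = (if j < k then 1 else 0)" if "j < n" for j using that n by (simp add: G_def)
  have Gi: "G!i!j = (if j = i then 2 else 0)" if "1 \<le> i" "i < n" "j < n" for i j using that by (simp add: G_def)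
  have std: "std_gen_matrix n 1 (n-1) G"
    unfolding std_gen_matrix_def
  proof (intro conjI allI impI ballI)
    show "1 + (n - 1) \<le> n" "length G = 1 + (n - 1)" using n by (auto simp: G_def)
    show "length r = n" if "r \<in> set G" for r using that by (auto simp: G_def)
    show "G ! i ! j = (if i = j then 1 else 0)" if "i < 1" "j < 1" for i j using that G0 n k by simp
    show "G ! i ! j \<in> {0, 1}" if "i < 1" "1 \<le> j \<and> j < 1 + (n - 1)" for i j
    proof -
      have "j < n" using that n by simp
      then show ?thesis using that G0[of j] by simp
    qed
    show "G ! i ! j = 0" if "1 \<le> i \<and> i < 1 + (n - 1)" "j < 1" for i j using that Gi[of i j] n by simp
    show "G ! i ! j = (if i = j then 2 else 0)" if "1 \<le> i \<and> i < 1 + (n - 1)" "1 \<le> j \<and> j < 1 + (n - 1)" for i j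
      using that Gi[of i j] by auto
    show "G ! i ! j \<in> {0, 2}" if "1 \<le> i \<and> i < 1 + (n - 1)" "1 + (n - 1) \<le> j \<and> j < n" for i j
    proof -
      have "1 + (n - 1) = n" using n by simp
      then show ?thesis using that by linarith
    qed
  qed
  have T0: "{j. j < n \<and> G!0!j = 1} = {..<k}" using G0 k by (auto split: if_splits)
  have "perm_coords n id ` row_span n G = Code n {j. j < n \<and> id j \<in> {..<k}}"
    unfolding span_char[OF n std] T0 perm_coords_eq
    by (rule signed_image[OF permutes_id]) (use k in auto)
  also have "{j. j < n \<and> id j \<in> {..<k}} = {..<k}" using k by auto
  finally show ?thesis unfolding has_type_def using std permutes_id by metis
qed

theorem mainTheorem5:
  fixes n :: nat
  assumes "n \<ge> 1"
  shows "N' n 1 (n - 1) = n"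
proof -
  let ?S = "nontriv_codes n 1 (n - 1)"
  let ?R = "{(C, D). z4_equiv n C D}"
  have img: "?R `` {C} = {D. z4_equiv n C D}" for C by auto
  have memS: "Code n {..<k} \<in> ?S" if "1 \<le> k" "k \<le> n" for k
    unfolding nontriv_codes_def using Code_is_code[of "{..<k}" n] Code_has_type[OF that]
      Code_nontriv[OF assms, of "{..<k}"] that by auto
  have charS: "\<exists>T. T \<subseteq> {..<n} \<and> T \<noteq> {} \<and> C = Code n T" if "C \<in> ?S" for C
    using has_type_Code[OF assms] that unfolding nontriv_codes_def by blast
  have q: "?S // ?R = Cl n ` {1..n}"
  proof
    show "?S // ?R \<subseteq> Cl n ` {1..n}"
    proof
      fix X assume "X \<in> ?S // ?R"
      then obtain C where C: "C \<in> ?S" and X: "X = ?R `` {C}" unfolding quotient_def by blast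
      obtain T where T: "T \<subseteq> {..<n}" "T \<noteq> {}" and CT: "C = Code n T" using charS[OF C] by blast
      have fT: "finite T" using finite_subset[OF T(1)] by simp
      have "card T \<le> n" using card_mono[OF _ T(1)] by simp
      moreover have "card T \<ge> 1" using fT T(2) by (simp add: Suc_le_eq card_gt_0_iff)
      moreover have "X = Cl n (card T)" unfolding X img CT using class_eq[OF T(1)] .
      ultimately show "X \<in> Cl n ` {1..n}" by auto
    qed
  next
    show "Cl n ` {1..n} \<subseteq> ?S // ?R"
    proof
      fix X assume "X \<in> Cl n ` {1..n}"
      then obtain k where k: "1 \<le> k" "k \<le> n" and X: "X = Cl n k" by auto
      have "?R `` {Code n {..<k}} = Cl n k" unfolding img using class_eq[of "{..<k}" n] k by simp
      then show "X \<in> ?S // ?R" using memS[OF k] X unfolding quotient_def by blast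
    qed
  qed
  have inj: "inj_on (Cl n) {1..n}"
  proof
    fix k k' assume k: "k \<in> {1..n}" and k': "k' \<in> {1..n}" and e: "Cl n k = Cl n k'"
    have "Code n {..<k} \<in> Cl n k" unfolding Cl_def using k by auto
    then have "Code n {..<k} \<in> Cl n k'" using e by simp
    then obtain T' where T': "T' \<subseteq> {..<n}" "card T' = k'" "Code n {..<k} = Code n T'"
      unfolding Cl_def by blast
    have "{..<k} = T'" using Code_inj[OF _ T'(1) T'(3)] k by auto
    then show "k = k'" using T'(2) by auto
  qed
  show ?thesis unfolding N'_def q using card_image[OF inj] by simp
qed

end
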